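(* Let $t\geq 2$ be a fixed integer and let $P$ be a finite poset with the unique cover twin property (UCTP) having at least $2$ elements. Then $\mathrm{sat}^{\star}([t]^n,P)=\Omega(\sqrt{n})$ as $n\to\infty$.
   Context: For positive integers $n,t$, $[n]=\{1,\dots,n\}$ and the hypergrid $[t]^n$ is the set of functions $f:[n]\to[t]$, partially ordered by $f\leq g$ iff $f(i)\leq g(i)$ for all $i\in[n]$. An induced copy of a poset $P$ in a family $\mathcal{F}\subseteq[t]^n$ is an injective map $\phi:P\to\mathcal{F}$ such that $\phi(x)\leq\phi(y)$ iff $x\leq_P y$. A family $\mathcal{F}\subseteq[t]^n$ is induced $P$-free if it contains no induced copy of $P$; it is induced $P$-saturated if it is induced $P$-free and for every $f\in[t]^n\setminus\mathcal{F}$ the family $\mathcal{F}\cup\{f\}$ contains an induced copy of $P$. Whenever $P$ embeds as an induced subposet of $[t]^n$, $\mathrm{sat}^{\star}([t]^n,P)$ denotes the minimum size of an induced $P$-saturated family in $[t]^n$. In a poset $P$, an element $x$ covers an element $y\neq x$ if $y\leq_P x$ and there is no $z\in P\setminus\{x,y\}$ with $y\leq_P z\leq_P x$. $P$ has the UCTP if whenever $x$ covers $y$, there exists $y'\in P\setminus\{x,y\}$ such that $x$ covers $y'$. *)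

theory Defs
  imports Complex_Main
begin

text \<open>The hypergrid [t]^n: functions [n] -> [t], represented as functions nat => nat
  that take values in {1..t} on {1..n} and are 0 outside {1..n} (extensional).
  The order is the pointwise order of functions (le_fun), which on the hypergrid
  coincides with f(i) <= g(i) for all i in [n].\<close>
definition hypergrid :: "nat \<Rightarrow> nat \<Rightarrow> (nat \<Rightarrow> nat) set" where
  "hypergrid t n = {f. (\<forall>i\<in>{1..n}. f i \<in> {1..t}) \<and> (\<forall>i. i \<notin> {1..n} \<longrightarrow> f i = 0)}"

text \<open>A finite poset is given by a carrier P and a relation r (x <=_P y iff (x,y) in r).\<close>

definition induced_copy :: "'a set \<Rightarrow> 'a rel \<Rightarrow> (nat \<Rightarrow> nat) set \<Rightarrow> ('a \<Rightarrow> (nat \<Rightarrow> nat)) \<Rightarrow> bool" where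
  "induced_copy P r F \<phi> \<longleftrightarrow> inj_on \<phi> P \<and> \<phi> ` P \<subseteq> F \<and>
     (\<forall>x\<in>P. \<forall>y\<in>P. \<phi> x \<le> \<phi> y \<longleftrightarrow> (x, y) \<in> r)"

definition induced_free :: "'a set \<Rightarrow> 'a rel \<Rightarrow> (nat \<Rightarrow> nat) set \<Rightarrow> bool" where
  "induced_free P r F \<longleftrightarrow> \<not> (\<exists>\<phi>. induced_copy P r F \<phi>)"

definition induced_saturated :: "nat \<Rightarrow> nat \<Rightarrow> 'a set \<Rightarrow> 'a rel \<Rightarrow> (nat \<Rightarrow> nat) set \<Rightarrow> bool" where
  "induced_saturated t n P r F \<longleftrightarrow> F \<subseteq> hypergrid t n \<and> induced_free P r F \<and>
     (\<forall>f \<in> hypergrid t n - F. \<not> induced_free P r (insert f F))"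

definition embeds_in_grid :: "nat \<Rightarrow> nat \<Rightarrow> 'a set \<Rightarrow> 'a rel \<Rightarrow> bool" where
  "embeds_in_grid t n P r \<longleftrightarrow> (\<exists>\<phi>. induced_copy P r (hypergrid t n) \<phi>)"

definition sat_star :: "nat \<Rightarrow> nat \<Rightarrow> 'a set \<Rightarrow> 'a rel \<Rightarrow> nat" where
  "sat_star t n P r = Min (card ` {F. induced_saturated t n P r F})"

definition covers :: "'a set \<Rightarrow> 'a rel \<Rightarrow> 'a \<Rightarrow> 'a \<Rightarrow> bool" where
  "covers P r x y \<longleftrightarrow> x \<in> P \<and> y \<in> P \<and> (y, x) \<in> r \<and> y \<noteq> x \<and>
     \<not> (\<exists>z\<in>P - {x, y}. (y, z) \<in> r \<and> (z, x) \<in> r)"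

definition UCTP :: "'a set \<Rightarrow> 'a rel \<Rightarrow> bool" where
  "UCTP P r \<longleftrightarrow> (\<forall>x\<in>P. \<forall>y\<in>P. covers P r x y \<longrightarrow> (\<exists>y'\<in>P - {x, y}. covers P r x y'))"

end

theory Submission
  imports Defs
begin

lemma grid_finite: "finite (hypergrid t n)"
proof -
  have "hypergrid t n \<subseteq> {f. \<forall>x. (x \<in> {1..n} \<longrightarrow> f x \<in> {1..t}) \<and> (x \<notin> {1..n} \<longrightarrow> f x = 0)}"
    unfolding hypergrid_def by auto
  moreover have "finite {f. \<forall>x. (x \<in> {1..n} \<longrightarrow> f x \<in> {1..t}) \<and> (x \<notin> {1..n} \<longrightarrow> f x = (0::nat))}"
    by (rule finite_set_of_finite_funs) auto
  ultimately show ?thesis by (rule finite_subset)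
qed

lemma twin_contra:
  assumes po: "partial_order_on P r" and uc: "UCTP P r"
    and cp: "induced_copy P r G \<phi>"
    and uP: "u \<in> P" and wP: "w \<in> P" and uw: "u \<noteq> w" and le: "\<phi> u \<le> \<phi> w"
    and A: "\<And>z. z \<in> P \<Longrightarrow> z \<noteq> u \<Longrightarrow> z \<noteq> w \<Longrightarrow> \<phi> z \<le> \<phi> w \<Longrightarrow> \<phi> z \<le> \<phi> u"
  shows False
proof -
  have rel: "\<And>x y. x \<in> P \<Longrightarrow> y \<in> P \<Longrightarrow> \<phi> x \<le> \<phi> y \<longleftrightarrow> (x, y) \<in> r"
    using cp unfolding induced_copy_def by blast
  have anti: "antisym r" using po unfolding partial_order_on_def by blast
  have uwr: "(u, w) \<in> r" using rel uP wP le by blast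
  have cov: "covers P r w u"
    unfolding covers_def
  proof (intro conjI)
    show "\<not> (\<exists>z\<in>P - {w, u}. (u, z) \<in> r \<and> (z, w) \<in> r)"
    proof
      assume "\<exists>z\<in>P - {w, u}. (u, z) \<in> r \<and> (z, w) \<in> r"
      then obtain z where z: "z \<in> P" "z \<noteq> w" "z \<noteq> u" "(u, z) \<in> r" "(z, w) \<in> r" by blast
      have "(z, u) \<in> r" using A[of z] z rel uP wP by blast
      with z(4) anti have "z = u" by (simp add: antisymD)
      with z show False by blast
    qed
  qed (use uP wP uwr uw in auto)
  then obtain y where y: "y \<in> P" "y \<noteq> w" "y \<noteq> u" "covers P r w y"
    using uc uP wP unfolding UCTP_def by blast
  have "(y, w) \<in> r" using y(4) unfolding covers_def by blast
  then have "(y, u) \<in> r" using A[of y] y rel uP wP by blast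
  then show False using y uwr uP uw unfolding covers_def by blast
qed

lemma clone_contra:
  assumes sat: "induced_saturated t n P r F"
    and po: "partial_order_on P r" and uc: "UCTP P r"
    and fG: "f \<in> hypergrid t n" and fF: "f \<notin> F" and gF: "g \<in> F"
    and cmp: "g \<le> f \<or> f \<le> g"
    and tw: "\<And>h. h \<in> F \<Longrightarrow> h \<noteq> g \<Longrightarrow> (h \<le> f \<longleftrightarrow> h \<le> g) \<and> (f \<le> h \<longleftrightarrow> g \<le> h)"
  shows False
proof -
  have free: "induced_free P r F" using sat unfolding induced_saturated_def by blast
  have "\<not> induced_free P r (insert f F)" using sat fG fF unfolding induced_saturated_def by blast
  then obtain \<phi> where cp: "induced_copy P r (insert f F) \<phi>" unfolding induced_free_def by blast
  have inj: "inj_on \<phi> P" and im: "\<phi> ` P \<subseteq> insert f F"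
    and rel: "\<And>x y. x \<in> P \<Longrightarrow> y \<in> P \<Longrightarrow> \<phi> x \<le> \<phi> y \<longleftrightarrow> (x, y) \<in> r"
    using cp unfolding induced_copy_def by blast+
  have fim: "f \<in> \<phi> ` P"
  proof (rule ccontr)
    assume "f \<notin> \<phi> ` P"
    then have "induced_copy P r F \<phi>" using cp unfolding induced_copy_def by blast
    then show False using free unfolding induced_free_def by blast
  qed
  then obtain x where xP: "x \<in> P" and fx: "\<phi> x = f" by blast
  have oth: "\<And>z. z \<in> P \<Longrightarrow> z \<noteq> x \<Longrightarrow> \<phi> z \<in> F"
    using inj im xP fx by (metis inj_on_contraD insertE image_subset_iff)
  show False
  proof (cases "g \<in> \<phi> ` P")
    case False
    define \<psi> where "\<psi> = \<phi>(x := g)"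
    have "induced_copy P r F \<psi>"
      unfolding induced_copy_def
    proof (intro conjI)
      show "inj_on \<psi> P"
        unfolding inj_on_def \<psi>_def using inj False
        by (auto simp: inj_on_def image_iff)
      show "\<psi> ` P \<subseteq> F" using oth gF unfolding \<psi>_def by auto
      show "\<forall>a\<in>P. \<forall>b\<in>P. (\<psi> a \<le> \<psi> b) = ((a, b) \<in> r)"
      proof (intro ballI)
        fix a b assume a: "a \<in> P" and b: "b \<in> P"
        have ng: "\<And>z. z \<in> P \<Longrightarrow> \<phi> z \<noteq> g" using False by blast
        show "(\<psi> a \<le> \<psi> b) = ((a, b) \<in> r)"
        proof (cases "a = x"; cases "b = x")
          assume "a = x" "b = x" then show ?thesis using rel[of x x] xP by (simp add: \<psi>_def)
        next
          assume "a = x" "b \<noteq> x"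
          then show ?thesis using tw[of "\<phi> b"] oth[of b] b ng[of b] rel[of x b] xP fx
            by (simp add: \<psi>_def)
        next
          assume "a \<noteq> x" "b = x"
          then show ?thesis using tw[of "\<phi> a"] oth[of a] a ng[of a] rel[of a x] xP fx
            by (simp add: \<psi>_def)
        next
          assume "a \<noteq> x" "b \<noteq> x"
          then show ?thesis using rel[of a b] a b by (simp add: \<psi>_def)
        qed
      qed
    qed
    then show False using free unfolding induced_free_def by blast
  next
    case True
    then obtain x' where x'P: "x' \<in> P" and gx: "\<phi> x' = g" by blast
    have xx: "x \<noteq> x'" using fx gx fF gF by blast
    have A: "\<And>z. z \<in> P \<Longrightarrow> z \<noteq> x \<Longrightarrow> z \<noteq> x' \<Longrightarrow>
        (\<phi> z \<le> f \<longleftrightarrow> \<phi> z \<le> g)"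
    proof -
      fix z assume z: "z \<in> P" "z \<noteq> x" "z \<noteq> x'"
      have "\<phi> z \<noteq> g" using inj z x'P gx by (metis inj_on_contraD)
      then show "(\<phi> z \<le> f \<longleftrightarrow> \<phi> z \<le> g)" using tw[of "\<phi> z"] oth[of z] z by blast
    qed
    show False
    proof (cases "g \<le> f")
      case True
      show False
        by (rule twin_contra[OF po uc cp x'P xP xx[symmetric]])
           (use True gx fx A in auto)
    next
      case False
      then have "f \<le> g" using cmp by blast
      show False
        by (rule twin_contra[OF po uc cp xP x'P xx])
           (use \<open>f \<le> g\<close> gx fx A in auto)
    qed
  qed
qed


lemma pair_exists:
  assumes sat: "induced_saturated t n P r F"
    and po: "partial_order_on P r" and uc: "UCTP P r" and t2: "t \<ge> 2"
    and Fne: "F \<noteq> {}" and i: "i \<in> {1..n}"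
  shows "\<exists>g h. g \<in> F \<and> h \<in> F \<and> g i < h i \<and> (\<forall>j. j \<noteq> i \<longrightarrow> h j \<le> g j)"
proof (rule ccontr)
  assume np: "\<not> ?thesis"
  have FG: "F \<subseteq> hypergrid t n" using sat unfolding induced_saturated_def by blast
  have finF: "finite F" using FG grid_finite finite_subset by blast
  have val: "\<And>h. h \<in> F \<Longrightarrow> h i \<in> {1..t}" using FG i unfolding hypergrid_def by blast
  show False
  proof (cases "\<exists>h0\<in>F. h0 i < t")
    case True
    then obtain h0 where h0: "h0 \<in> F" "h0 i < t" by blast
    define v where "v = h0 i"
    define A where "A = {h\<in>F. h i = v}"
    have "finite A" "A \<noteq> {}" using finF h0 unfolding A_def v_def by auto
    then obtain g where gA: "g \<in> A" and gmax: "\<forall>b\<in>A. g \<le> b \<longrightarrow> g = b"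
      using finite_has_maximal by blast
    have gF: "g \<in> F" and gv: "g i = v" using gA unfolding A_def by auto
    define f where "f = g(i := Suc v)"
    have gfle: "g \<le> f" unfolding f_def le_fun_def using gv by auto
    have fG: "f \<in> hypergrid t n"
      using FG gF i h0 unfolding f_def hypergrid_def v_def by auto
    have fF: "f \<notin> F"
    proof
      assume "f \<in> F"
      moreover have "g i < f i" "\<forall>j. j \<noteq> i \<longrightarrow> f j \<le> g j"
        using gv unfolding f_def by auto
      ultimately show False using np gF by blast
    qed
    show False
    proof (rule clone_contra[OF sat po uc fG fF gF])
      show "g \<le> f \<or> f \<le> g" using gfle by blast
      fix h assume hF: "h \<in> F" and hg: "h \<noteq> g"
      have 1: "h \<le> f \<longleftrightarrow> h \<le> g"
      proof
        assume hf: "h \<le> f"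
        show "h \<le> g"
        proof (cases "h i \<le> g i")
          case True
          then show ?thesis using hf unfolding le_fun_def f_def by (metis fun_upd_other)
        next
          case False
          then have "g i < h i" by simp
          moreover have "\<forall>j. j \<noteq> i \<longrightarrow> h j \<le> g j" using hf unfolding le_fun_def f_def by (metis fun_upd_other)
          ultimately show ?thesis using np gF hF by blast
        qed
      next
        assume "h \<le> g" then show "h \<le> f" using gfle by (rule order_trans)
      qed
      have 2: "f \<le> h \<longleftrightarrow> g \<le> h"
      proof
        assume "f \<le> h" then show "g \<le> h" using gfle by (metis order_trans)
      next
        assume gh: "g \<le> h"
        have "h i \<ge> v" using gh gv unfolding le_fun_def by metis
        moreover have "h i \<noteq> v"
        proof
          assume "h i = v"
          then have "h \<in> A" using hF unfolding A_def by blast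
          then show False using gmax gh hg by blast
        qed
        ultimately have "h i \<ge> Suc v" by simp
        then show "f \<le> h" using gh unfolding f_def le_fun_def by auto
      qed
      show "(h \<le> f \<longleftrightarrow> h \<le> g) \<and> (f \<le> h \<longleftrightarrow> g \<le> h)" using 1 2 by blast
    qed
  next
    case False
    then have allt: "\<And>h. h \<in> F \<Longrightarrow> h i = t" using val by fastforce
    obtain g where gF: "g \<in> F" and gmin: "\<forall>b\<in>F. b \<le> g \<longrightarrow> g = b"
      using finite_has_minimal[OF finF Fne] by blast
    define f where "f = g(i := t - 1)"
    have fgle: "f \<le> g" unfolding f_def le_fun_def using allt[OF gF] by auto
    have fG: "f \<in> hypergrid t n"
      using FG gF i t2 unfolding f_def hypergrid_def by auto
    have fF: "f \<notin> F"
    proof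
      assume "f \<in> F"
      then have "f i = t" by (rule allt)
      then show False using t2 unfolding f_def by simp
    qed
    show False
    proof (rule clone_contra[OF sat po uc fG fF gF])
      show "g \<le> f \<or> f \<le> g" using fgle by blast
      fix h assume hF: "h \<in> F" and hg: "h \<noteq> g"
      have n1: "\<not> h \<le> g" using gmin hF hg by blast
      have n2: "\<not> h \<le> f" using n1 fgle order_trans by blast
      have 2: "f \<le> h \<longleftrightarrow> g \<le> h"
      proof
        assume fh: "f \<le> h"
        show "g \<le> h" unfolding le_fun_def
        proof
          fix j show "g j \<le> h j"
          proof (cases "j = i")
            case True then show ?thesis using allt[OF gF] allt[OF hF] by simp
          next
            case False then show ?thesis using fh unfolding le_fun_def f_def by (metis fun_upd_other)
          qed
        qed
      next
        assume "g \<le> h" then show "f \<le> h" using fgle by (metis order_trans)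
      qed
      show "(h \<le> f \<longleftrightarrow> h \<le> g) \<and> (f \<le> h \<longleftrightarrow> g \<le> h)" using n1 n2 2 by blast
    qed
  qed
qed

lemma sat_nonempty:
  assumes sat: "induced_saturated t n P r F" and t1: "t \<ge> 1" and cP: "card P \<ge> 2"
  shows "F \<noteq> {}"
proof
  assume F0: "F = {}"
  define f :: "nat \<Rightarrow> nat" where "f = (\<lambda>j. if j \<in> {1..n} then 1 else 0)"
  have "f \<in> hypergrid t n" using t1 unfolding f_def hypergrid_def by auto
  then have "\<not> induced_free P r {f}" using sat F0 unfolding induced_saturated_def by auto
  then obtain \<phi> where "inj_on \<phi> P" "\<phi> ` P \<subseteq> {f}"
    unfolding induced_free_def induced_copy_def by blast
  then have "card P \<le> card {f}"
    by (metis card_image card_mono finite.emptyI finite.insertI)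
  then show False using cP by simp
qed

lemma sat_card_bound:
  assumes sat: "induced_saturated t n P r F"
    and po: "partial_order_on P r" and uc: "UCTP P r" and t2: "t \<ge> 2" and cP: "card P \<ge> 2"
  shows "n \<le> card F * card F"
proof -
  have FG: "F \<subseteq> hypergrid t n" using sat unfolding induced_saturated_def by blast
  have finF: "finite F" using FG grid_finite finite_subset by blast
  have Fne: "F \<noteq> {}" using sat_nonempty[OF sat _ cP] t2 by simp
  define p where "p i = (SOME gh. fst gh \<in> F \<and> snd gh \<in> F \<and> fst gh i < snd gh i \<and>
       (\<forall>j. j \<noteq> i \<longrightarrow> snd gh j \<le> fst gh j))" for i
  have pp: "fst (p i) \<in> F \<and> snd (p i) \<in> F \<and> fst (p i) i < snd (p i) i \<and>
       (\<forall>j. j \<noteq> i \<longrightarrow> snd (p i) j \<le> fst (p i) j)" if i: "i \<in> {1..n}" for i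
  proof -
    obtain g h where "g \<in> F \<and> h \<in> F \<and> g i < h i \<and> (\<forall>j. j \<noteq> i \<longrightarrow> h j \<le> g j)"
      using pair_exists[OF sat po uc t2 Fne i] by blast
    then have "\<exists>gh. fst gh \<in> F \<and> snd gh \<in> F \<and> fst gh i < snd gh i \<and>
       (\<forall>j. j \<noteq> i \<longrightarrow> snd gh j \<le> fst gh j)" by (intro exI[of _ "(g,h)"]) simp
    then show ?thesis unfolding p_def by (rule someI_ex)
  qed
  have inj: "inj_on p {1..n}"
  proof (rule inj_onI)
    fix a b assume a: "a \<in> {1..n}" and b: "b \<in> {1..n}" and e: "p a = p b"
    show "a = b"
    proof (rule ccontr)
      assume "a \<noteq> b"
      then have "snd (p b) a \<le> fst (p b) a" using pp[OF b] by blast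
      moreover have "fst (p a) a < snd (p a) a" using pp[OF a] by blast
      ultimately show False using e by simp
    qed
  qed
  have sub: "p ` {1..n} \<subseteq> F \<times> F"
  proof
    fix q assume "q \<in> p ` {1..n}"
    then obtain i where "i \<in> {1..n}" "q = p i" by blast
    then show "q \<in> F \<times> F" using pp[of i] by (simp add: mem_Times_iff)
  qed
  have "card {1..n} \<le> card (F \<times> F)"
    using card_inj_on_le[OF inj sub] finF by simp
  then show ?thesis by (simp add: card_cartesian_product)
qed

theorem mainTheorem3:
  fixes t :: nat and P :: "'a set" and r :: "'a rel"
  assumes "t \<ge> 2"
    and "finite P" and "card P \<ge> 2"
    and "r \<subseteq> P \<times> P" and "partial_order_on P r"
    and "UCTP P r"
  shows "\<exists>c > (0::real). \<exists>N. \<forall>n \<ge> N.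
           embeds_in_grid t n P r \<longrightarrow> c * sqrt (real n) \<le> real (sat_star t n P r)"
proof (intro exI[of _ 1] conjI exI[of _ 0] allI impI)
  fix n :: nat
  define S where "S = {F. induced_saturated t n P r F}"
  have Pne: "P \<noteq> {}" using assms(3) by auto
  define C where "C = {F. F \<subseteq> hypergrid t n \<and> induced_free P r F}"
  have "C \<subseteq> Pow (hypergrid t n)" unfolding C_def by blast
  then have finC: "finite C" using grid_finite finite_subset by blast
  have "{} \<in> C" unfolding C_def induced_free_def induced_copy_def using Pne by auto
  then have "card ` C \<noteq> {}" by blast
  have finCC: "finite (card ` C)" using finC by simp
  obtain F where FC: "F \<in> C" and Fm: "card F = Max (card ` C)"
    using Max_in[OF finCC \<open>card ` C \<noteq> {}\<close>] by auto
  have "induced_saturated t n P r F"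
    unfolding induced_saturated_def
  proof (intro conjI ballI)
    show "F \<subseteq> hypergrid t n" "induced_free P r F" using FC unfolding C_def by auto
    fix f assume f: "f \<in> hypergrid t n - F"
    show "\<not> induced_free P r (insert f F)"
    proof
      assume fr: "induced_free P r (insert f F)"
      have finF: "finite F" using FC grid_finite finite_subset unfolding C_def by blast
      have "insert f F \<in> C" using fr f FC unfolding C_def by auto
      then have "card (insert f F) \<le> Max (card ` C)" using finCC by simp
      then show False using Fm f finF by simp
    qed
  qed
  then have Sne: "S \<noteq> {}" unfolding S_def by blast
  have finS: "finite (card ` S)"
  proof (rule finite_subset)
    show "card ` S \<subseteq> {..card (hypergrid t n)}"
    proof
      fix k assume "k \<in> card ` S"
      then obtain F where "F \<in> S" "k = card F" by blast
      then have "F \<subseteq> hypergrid t n" unfolding S_def induced_saturated_def by blast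
      then have "k \<le> card (hypergrid t n)" using card_mono[OF grid_finite] \<open>k = card F\<close> by blast
      then show "k \<in> {..card (hypergrid t n)}" by simp
    qed
  qed simp
  have "sat_star t n P r \<in> card ` S"
    unfolding sat_star_def S_def[symmetric] using Max_in Min_in[OF finS] Sne by blast
  then obtain F where FS: "induced_saturated t n P r F" and cF: "sat_star t n P r = card F"
    unfolding S_def by auto
  have "n \<le> card F * card F" using sat_card_bound[OF FS assms(5,6,1,3)] .
  then have "real n \<le> real (card F * card F)" by linarith
  then have "real n \<le> real (card F) ^ 2" by (simp add: power2_eq_square)
  then have "sqrt (real n) \<le> sqrt (real (card F) ^ 2)" by (rule real_sqrt_le_mono)
  then have "sqrt (real n) \<le> real (card F)" by simp
  then show "1 * sqrt (real n) \<le> real (sat_star t n P r)" using cF by simp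
qed (simp)

end
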